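(* Let $\lambda>0$, $\lambda_{max}>0$, $p\in(0,1)$. Suppose $P_b\in[0,1)$ satisfies $$P_b=1-\exp\!\Big(-\frac{\lambda(1-P_b)\,r}{\lambda_{max}}\Big),\qquad r=\min\Big\{\frac{p}{1-P_b},1\Big\}.$$ If $\frac{-\lambda_{max}\ln p}{\lambda}>p$, then $P_b=1-\exp\!\big(-\frac{p\lambda}{\lambda_{max}}\big)$. Otherwise, $P_b$ satisfies $P_b=1-\exp\!\big(-\frac{\lambda(1-P_b)}{\lambda_{max}}\big)$.
   Context: CSMA model: packets arrive as a Poisson process and are assigned to transmitters uniformly located in a large area, yielding (in the limit) transmitter density $\lambda$ in $\mathbb{R}^2$; each receiver is at distance $d$ from its transmitter, path-loss exponent $\alpha>2$, Rayleigh fading, SIR threshold $\theta$, and $\lambda_{max}=\frac{1}{d^2\theta^{2/\alpha}\kappa(\alpha)}$ with $\kappa(\alpha)=\frac{2\pi^2}{\alpha\sin(2\pi/\alpha)}$. A transmitter sends (with unit power) if its sensed SIR exceeds $\theta$ and its battery (infinite capacity, one energy unit arriving per slot with probability $p$, i.i.d.) is nonempty; otherwise it backs off. $P_b$ is the back-off probability and $r$ the stationary probability of a nonempty battery. Under the modeling approximation that back-off events of different transmitters are independent, so that active transmitters form a Poisson point process of density $\lambda(1-P_b)r$, the back-off probability is a number $P_b\in[0,1)$ satisfying the displayed fixed-point equation. *)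

theory Defs
  imports Complex_Main
begin

end

theory Submission
  imports Defs
begin

theorem theorem5:
  fixes lam lmax p Pb r :: real
  assumes "lam > 0" and "lmax > 0" and "0 < p" and "p < 1"
    and "0 \<le> Pb" and "Pb < 1"
    and "r = min (p / (1 - Pb)) 1"
    and "Pb = 1 - exp (- (lam * (1 - Pb) * r / lmax))"
  shows "(- lmax * ln p / lam > p \<longrightarrow> Pb = 1 - exp (- (p * lam / lmax)))
       \<and> (\<not> (- lmax * ln p / lam > p) \<longrightarrow> Pb = 1 - exp (- (lam * (1 - Pb) / lmax)))"
proof -
  define q where "q = 1 - Pb"
  have q0: "q > 0" using assms q_def by simp
  have mq: "(1 - Pb) * r = min p q"
    using q0 assms(3,7) unfolding q_def by (auto simp: min_def field_simps)
  have eq: "q = exp (- (lam * min p q / lmax))"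
    using assms(8) mq unfolding q_def by (simp add: mult.assoc)
  have cond: "(- lmax * ln p / lam > p) \<longleftrightarrow> p < exp (- (p * lam / lmax))"
  proof -
    have "(- lmax * ln p / lam > p) \<longleftrightarrow> ln p < - (p * lam / lmax)"
      using assms(1,2) by (simp add: field_simps, linarith)
    also have "\<dots> \<longleftrightarrow> exp (ln p) < exp (- (p * lam / lmax))" by simp
    finally show ?thesis using assms(3) by simp
  qed
  show ?thesis
  proof (intro conjI impI)
    assume c: "- lmax * ln p / lam > p"
    hence pe: "p < exp (- (p * lam / lmax))" using cond by simp
    have "q \<ge> p"
    proof (rule ccontr)
      assume "\<not> q \<ge> p"
      hence qp: "q < p" by simp
      hence "q = exp (- (lam * q / lmax))" using eq by (simp add: min_def)
      moreover have "exp (- (p * lam / lmax)) \<le> exp (- (lam * q / lmax))"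
        using qp assms(1,2) by (simp add: divide_right_mono mult_left_mono mult.commute)
      ultimately show False using qp pe by linarith
    qed
    hence "q = exp (- (lam * p / lmax))" using eq by (simp add: min_def)
    thus "Pb = 1 - exp (- (p * lam / lmax))" unfolding q_def by (simp add: mult.commute)
  next
    assume c: "\<not> (- lmax * ln p / lam > p)"
    hence pe: "p \<ge> exp (- (p * lam / lmax))" using cond by simp
    have "min p q = q"
    proof (cases "q \<le> p")
      case True thus ?thesis by simp
    next
      case False
      hence "q = exp (- (lam * p / lmax))" using eq by (simp add: min_def)
      hence "q \<le> p" using pe by (simp add: mult.commute)
      thus ?thesis using False by simp
    qed
    thus "Pb = 1 - exp (- (lam * (1 - Pb) / lmax))" using eq unfolding q_def by simp
  qed
qed

end
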